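(* Let $K\in\{\mathcal{T},\mathcal{O},\mathcal{I}\}$ and let $G_K(L,H)$ be any reflection group in canonical form for $K$, and let $n\ge2$ and $G_{\mathcal{D}_n}(L',H')$ be any reflection group in canonical form for the dicyclic group $\mathcal{D}_n$. Then $G_K(L,H)$ and $G_{\mathcal{D}_n}(L',H')$ are not isomorphic.
   Context: $\mathbb{H}$ is the real quaternion algebra with basis $1,i,j,k$, $U(\mathbb{H})$ its unit group. $\mathcal{T}:=\langle i,\frac{1+i+j+k}{2}\rangle$ (binary tetrahedral, order 24), $\mathcal{O}:=\langle\frac{1+i}{\sqrt2},\frac{1+i+j+k}{2}\rangle$ (binary octahedral, order 48), $\mathcal{I}:=\langle i,\frac{1+i+j+k}{2},\frac{1+\tau i+\sigma j}{2}\rangle$ with $\tau=\frac{1+\sqrt5}{2}$, $\sigma=\frac{1-\sqrt5}{2}$ (binary icosahedral, order 120). For $n\ge2$, $\omega:=\cos(\pi/n)+i\sin(\pi/n)$ and $\mathcal{D}_n:=\langle\omega,j\rangle$ (order $4n$). For a finite group $K$ put $a\circ b:=ab^{-1}a$; a reflection system for $K$ is a subset $L$ generating $K$, closed under $\circ$, containing $1$. For $H\trianglelefteq K$ with $H\subseteq L$, $LH=L$, $G(K,L,H)$ is the subgroup of $U(\mathbb{H}^2)$ generated by $\mathrm{diag}(h,1),\mathrm{diag}(1,h)$ ($h\in H$) and $M_b=\begin{pmatrix}0&b\\ b^{-1}&0\end{pmatrix}$ ($b\in L$); it is in canonical form, written $G_K(L,H)$, if $\{b\in K: M_b\in G(K,L,H)\}=L$.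 A reflection is a non-identity $g\in U(\mathbb{H}^2)$ with $\operatorname{rank}(g-I)=1$. Isomorphic means isomorphic via a group isomorphism mapping the set of reflections onto the set of reflections. *)

theory Defs
  imports Complex_Main
begin

datatype quat = Quat (qre: real) (qim1: real) (qim2: real) (qim3: real)

instantiation quat :: "{zero, one, plus, minus, uminus, times, inverse}"
begin
definition "0 = Quat 0 0 0 0"
definition "1 = Quat 1 0 0 0"
definition "x + y = Quat (qre x + qre y) (qim1 x + qim1 y) (qim2 x + qim2 y) (qim3 x + qim3 y)"
definition "x - y = Quat (qre x - qre y) (qim1 x - qim1 y) (qim2 x - qim2 y) (qim3 x - qim3 y)"
definition "- x = Quat (- qre x) (- qim1 x) (- qim2 x) (- qim3 x)"
definition "x * y = Quat
   (qre x * qre y - qim1 x * qim1 y - qim2 x * qim2 y - qim3 x * qim3 y)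
   (qre x * qim1 y + qim1 x * qre y + qim2 x * qim3 y - qim3 x * qim2 y)
   (qre x * qim2 y - qim1 x * qim3 y + qim2 x * qre y + qim3 x * qim1 y)
   (qre x * qim3 y + qim1 x * qim2 y - qim2 x * qim1 y + qim3 x * qre y)"
definition "inverse x = (let n = (qre x)\<^sup>2 + (qim1 x)\<^sup>2 + (qim2 x)\<^sup>2 + (qim3 x)\<^sup>2 in
   Quat (qre x / n) (- qim1 x / n) (- qim2 x / n) (- qim3 x / n))"
definition "divide x (y::quat) = x * inverse y"
instance ..
end

definition qcnj :: "quat \<Rightarrow> quat" where
  "qcnj x = Quat (qre x) (- qim1 x) (- qim2 x) (- qim3 x)"

definition qI :: quat where "qI = Quat 0 1 0 0"
definition qJ :: quat where "qJ = Quat 0 0 1 0"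
definition qK :: quat where "qK = Quat 0 0 0 1"

inductive_set qgen :: "quat set \<Rightarrow> quat set" for S :: "quat set" where
  qgen_one: "1 \<in> qgen S"
| qgen_gen: "s \<in> S \<Longrightarrow> s \<in> qgen S"
| qgen_mult: "x \<in> qgen S \<Longrightarrow> y \<in> qgen S \<Longrightarrow> x * y \<in> qgen S"
| qgen_inv: "x \<in> qgen S \<Longrightarrow> inverse x \<in> qgen S"

definition tau :: real where "tau = (1 + sqrt 5) / 2"
definition sigma :: real where "sigma = (1 - sqrt 5) / 2"

definition binT :: "quat set" where
  "binT = qgen {qI, Quat (1/2) (1/2) (1/2) (1/2)}"
definition binO :: "quat set" where
  "binO = qgen {Quat (1 / sqrt 2) (1 / sqrt 2) 0 0, Quat (1/2) (1/2) (1/2) (1/2)}"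
definition binI :: "quat set" where
  "binI = qgen {qI, Quat (1/2) (1/2) (1/2) (1/2), Quat (1/2) (tau/2) (sigma/2) 0}"
definition dicyc :: "nat \<Rightarrow> quat set" where
  "dicyc n = qgen {Quat (cos (pi / real n)) (sin (pi / real n)) 0 0, qJ}"

definition circ :: "quat \<Rightarrow> quat \<Rightarrow> quat" where
  "circ a b = a * inverse b * a"

definition reflection_system :: "quat set \<Rightarrow> quat set \<Rightarrow> bool" where
  "reflection_system K L \<longleftrightarrow> L \<subseteq> K \<and> qgen L = K \<and> 1 \<in> L \<and>
     (\<forall>a\<in>L. \<forall>b\<in>L. circ a b \<in> L)"

definition normal_subgroup :: "quat set \<Rightarrow> quat set \<Rightarrow> bool" where
  "normal_subgroup H K \<longleftrightarrow> H \<subseteq> K \<and> 1 \<in> H \<and>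
     (\<forall>x\<in>H. \<forall>y\<in>H. x * y \<in> H) \<and> (\<forall>x\<in>H. inverse x \<in> H) \<and>
     (\<forall>k\<in>K. \<forall>h\<in>H. k * h * inverse k \<in> H)"

text \<open>\<open>QMat a b c d\<close> is the matrix with rows (a b) and (c d).\<close>
datatype qmat = QMat quat quat quat quat

fun mmul :: "qmat \<Rightarrow> qmat \<Rightarrow> qmat" where
  "mmul (QMat a b c d) (QMat a' b' c' d') =
     QMat (a * a' + b * c') (a * b' + b * d') (c * a' + d * c') (c * b' + d * d')"

fun msub :: "qmat \<Rightarrow> qmat \<Rightarrow> qmat" where
  "msub (QMat a b c d) (QMat a' b' c' d') = QMat (a - a') (b - b') (c - c') (d - d')"

fun madj :: "qmat \<Rightarrow> qmat" where
  "madj (QMat a b c d) = QMat (qcnj a) (qcnj c) (qcnj b) (qcnj d)"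

definition mI :: qmat where "mI = QMat 1 0 0 1"
definition mzero :: qmat where "mzero = QMat 0 0 0 0"

definition unitary :: "qmat set" where
  "unitary = {M. mmul (madj M) M = mI \<and> mmul M (madj M) = mI}"

definition rank_one :: "qmat \<Rightarrow> bool" where
  "rank_one M \<longleftrightarrow> M \<noteq> mzero \<and>
     (\<exists>v1 v2 w1 w2. M = QMat (v1 * w1) (v1 * w2) (v2 * w1) (v2 * w2))"

definition is_reflection :: "qmat \<Rightarrow> bool" where
  "is_reflection g \<longleftrightarrow> g \<in> unitary \<and> g \<noteq> mI \<and> rank_one (msub g mI)"

text \<open>Subgroup of \<open>U(\<bbbH>\<^sup>2)\<close> generated by a set of unitary matrices
  (the inverse of a unitary matrix is its conjugate transpose).\<close>
inductive_set mgen :: "qmat set \<Rightarrow> qmat set" for S :: "qmat set" where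
  mgen_one: "mI \<in> mgen S"
| mgen_gen: "s \<in> S \<Longrightarrow> s \<in> mgen S"
| mgen_mult: "x \<in> mgen S \<Longrightarrow> y \<in> mgen S \<Longrightarrow> mmul x y \<in> mgen S"
| mgen_inv: "x \<in> mgen S \<Longrightarrow> madj x \<in> mgen S"

definition Mb :: "quat \<Rightarrow> qmat" where
  "Mb b = QMat 0 b (inverse b) 0"

text \<open>\<open>G(K,L,H)\<close> (it depends only on \<open>L\<close> and \<open>H\<close>)\<close>
definition GKLH :: "quat set \<Rightarrow> quat set \<Rightarrow> qmat set" where
  "GKLH L H = mgen ((\<lambda>h. QMat h 0 0 1) ` H \<union> (\<lambda>h. QMat 1 0 0 h) ` H \<union> Mb ` L)"

definition canonical_refl_group :: "quat set \<Rightarrow> quat set \<Rightarrow> quat set \<Rightarrow> bool" where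
  "canonical_refl_group K L H \<longleftrightarrow>
     reflection_system K L \<and> normal_subgroup H K \<and> H \<subseteq> L \<and>
     {l * h | l h. l \<in> L \<and> h \<in> H} = L \<and>
     {b \<in> K. Mb b \<in> GKLH L H} = L"

definition refl_isomorphic :: "qmat set \<Rightarrow> qmat set \<Rightarrow> bool" where
  "refl_isomorphic G1 G2 \<longleftrightarrow> (\<exists>\<phi>. bij_betw \<phi> G1 G2 \<and>
     (\<forall>x\<in>G1. \<forall>y\<in>G1. \<phi> (mmul x y) = mmul (\<phi> x) (\<phi> y)) \<and>
     \<phi> ` {g \<in> G1. is_reflection g} = {g \<in> G2. is_reflection g})"

end

theory Submission
  imports Defs
begin

lemma qz1[simp]: "x * (0::quat) = 0" by (simp add: times_quat_def zero_quat_def)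
lemma qz2[simp]: "(0::quat) * x = 0" by (simp add: times_quat_def zero_quat_def)
lemma qz3[simp]: "x + (0::quat) = x" by (cases x) (simp add: plus_quat_def zero_quat_def)
lemma qz4[simp]: "(0::quat) + x = x" by (cases x) (simp add: plus_quat_def zero_quat_def)
lemma qz5[simp]: "qcnj 0 = 0" by (simp add: qcnj_def zero_quat_def)
lemma qone_inv[simp]: "inverse (1::quat) = 1" by (simp add: inverse_quat_def one_quat_def)
lemma qone_mult[simp]: "x * (1::quat) = x" "(1::quat) * x = x"
  by (cases x, simp add: times_quat_def one_quat_def)+

definition nq :: "quat \<Rightarrow> real" where
  "nq x = (qre x)\<^sup>2 + (qim1 x)\<^sup>2 + (qim2 x)\<^sup>2 + (qim3 x)\<^sup>2"

lemma nq_mult: "nq (x * y) = nq x * nq y"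
  by (simp add: nq_def times_quat_def power2_eq_square algebra_simps)

lemma nq_inv: "nq x = 1 \<Longrightarrow> inverse x = qcnj x"
  by (simp add: nq_def inverse_quat_def qcnj_def Let_def)

lemma nq_inv2: "nq x = 1 \<Longrightarrow> nq (inverse x) = 1"
  by (simp add: nq_def inverse_quat_def Let_def)

lemma qgen_unit: assumes "\<forall>s\<in>S. nq s = 1" shows "x \<in> qgen S \<Longrightarrow> nq x = 1"
proof (induction rule: qgen.induct)
  case qgen_one then show ?case by (simp add: nq_def one_quat_def)
next
  case (qgen_gen s) then show ?case using assms by auto
next
  case (qgen_mult x y) then show ?case by (simp add: nq_mult)
next
  case (qgen_inv x) then show ?case by (simp add: nq_inv2)
qed

lemma tau_sigma: "tau\<^sup>2 + sigma\<^sup>2 = 3"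
proof -
  have "sqrt 5 * sqrt 5 = 5" by simp
  then show ?thesis by (simp add: tau_def sigma_def power2_eq_square field_simps)
qed

lemma K_unit: assumes "K \<in> {binT, binO, binI}" and "x \<in> K" shows "nq x = 1"
proof -
  have a: "nq qI = 1" "nq (Quat (1/2) (1/2) (1/2) (1/2)) = 1"
    by (simp_all add: nq_def qI_def power2_eq_square)
  have b: "nq (Quat (1 / sqrt 2) (1 / sqrt 2) 0 0) = 1"
  proof -
    have h: "(1/sqrt 2)^2 = (1/2::real)" by (metis power_divide power_one real_sqrt_pow2 zero_le_numeral)
    show ?thesis unfolding nq_def quat.sel h by simp
  qed
  have c: "nq (Quat (1/2) (tau/2) (sigma/2) 0) = 1"
  proof -
    have "nq (Quat (1/2) (tau/2) (sigma/2) 0) = (1 + (tau\<^sup>2 + sigma\<^sup>2)) / 4"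
      by (simp add: nq_def power_divide)
    then show ?thesis by (simp add: tau_sigma)
  qed
  show ?thesis using assms a b c
    by (auto simp: binT_def binO_def binI_def intro: qgen_unit[rotated])
qed

definition qq :: quat where "qq = Quat (1/2) (1/2) (1/2) (1/2)"

lemma qq_in: assumes "K \<in> {binT, binO, binI}" shows "qq \<in> K" "qI \<in> K"
proof -
  have r: "Quat (1 / sqrt 2) (1 / sqrt 2) 0 0 * Quat (1 / sqrt 2) (1 / sqrt 2) 0 0 = qI"
  proof -
    have h: "(1/sqrt 2) * (1/sqrt 2) = (1/2::real)"
      by (metis power_divide power_one real_sqrt_pow2 zero_le_numeral power2_eq_square)
    show ?thesis unfolding times_quat_def quat.sel h qI_def by simp
  qed
  show "qq \<in> K" using assms by (auto simp: binT_def binO_def binI_def qq_def intro: qgen.intros)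
  show "qI \<in> K" using assms
    apply (auto simp: binT_def binO_def binI_def intro: qgen.intros)
    apply (subst r[symmetric])
    apply (intro qgen.intros(3) qgen.intros(2); simp)
    done
qed

lemma K_closed: "qgen S = K \<Longrightarrow> x \<in> K \<Longrightarrow> y \<in> K \<Longrightarrow> x * y \<in> K"
  "qgen S = K \<Longrightarrow> x \<in> K \<Longrightarrow> inverse x \<in> K"
  by (auto intro: qgen.intros)

definition pow4 :: "qmat \<Rightarrow> qmat" where "pow4 g = mmul (mmul g g) (mmul g g)"

lemma G_one: "mI \<in> GKLH L H" unfolding GKLH_def by (rule mgen.intros)
lemma G_Mb: "b \<in> L \<Longrightarrow> Mb b \<in> GKLH L H" unfolding GKLH_def by (rule mgen.intros(2)) blast
lemma G_mult: "x \<in> GKLH L H \<Longrightarrow> y \<in> GKLH L H \<Longrightarrow> mmul x y \<in> GKLH L H"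
  unfolding GKLH_def by (rule mgen.intros)
lemma G_adj: "x \<in> GKLH L H \<Longrightarrow> madj x \<in> GKLH L H"
  unfolding GKLH_def by (rule mgen.intros)

lemma diag_in_G:
  assumes rs: "reflection_system K L" and Ku: "\<forall>x\<in>K. nq x = 1"
  shows "x \<in> qgen L \<Longrightarrow> \<exists>y. QMat x 0 0 y \<in> GKLH L H"
proof (induction rule: qgen.induct)
  case qgen_one
  have "QMat 1 0 0 1 \<in> GKLH L H" using G_one[of L H] by (simp only: mI_def)
  then show ?case by blast
next
  case (qgen_gen b)
  have "1 \<in> L" using rs by (simp add: reflection_system_def)
  then have "mmul (Mb b) (Mb 1) \<in> GKLH L H" using qgen_gen by (intro G_mult G_Mb)
  moreover have "mmul (Mb b) (Mb 1) = QMat b 0 0 (inverse b)" by (simp add: Mb_def)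
  ultimately show ?case by metis
next
  case (qgen_mult x y)
  then obtain a b where "QMat x 0 0 a \<in> GKLH L H" "QMat y 0 0 b \<in> GKLH L H" by blast
  then have "mmul (QMat x 0 0 a) (QMat y 0 0 b) \<in> GKLH L H" by (rule G_mult)
  moreover have "mmul (QMat x 0 0 a) (QMat y 0 0 b) = QMat (x*y) 0 0 (a*b)" by simp
  ultimately show ?case by metis
next
  case (qgen_inv x)
  then obtain a where "QMat x 0 0 a \<in> GKLH L H" by blast
  then have "madj (QMat x 0 0 a) \<in> GKLH L H" by (rule G_adj)
  moreover have "nq x = 1" using qgen_inv rs Ku by (auto simp: reflection_system_def)
  ultimately have "QMat (inverse x) 0 0 (qcnj a) \<in> GKLH L H" by (simp add: nq_inv)
  then show ?case by blast
qed

definition Pq :: "quat \<Rightarrow> bool" where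
  "Pq x \<longleftrightarrow> (qim2 x = 0 \<and> qim3 x = 0) \<or> (qre x = 0 \<and> qim1 x = 0)"
definition Cq :: "quat \<Rightarrow> bool" where
  "Cq x \<longleftrightarrow> qim2 x = 0 \<and> qim3 x = 0"

lemma Pq_mult: "Pq x \<Longrightarrow> Pq y \<Longrightarrow> Pq (x * y)"
  by (auto simp: Pq_def times_quat_def)
lemma Pq_inv: "Pq x \<Longrightarrow> Pq (inverse x)"
  by (auto simp: Pq_def inverse_quat_def Let_def)
lemma Pq_cnj: "Pq x \<Longrightarrow> Pq (qcnj x)"
  by (auto simp: Pq_def qcnj_def)
lemma Pq_sq: "Pq x \<Longrightarrow> Cq (x * x)"
  by (auto simp: Pq_def Cq_def times_quat_def)
lemma Cq_Pq: "Cq x \<Longrightarrow> Pq x" by (simp add: Pq_def Cq_def)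
lemma Cq_comm: "Cq x \<Longrightarrow> Cq y \<Longrightarrow> x * y = y * x"
  by (simp add: Cq_def times_quat_def algebra_simps)
lemma Pq_one: "Pq 1" by (simp add: Pq_def one_quat_def)

lemma dicyc_P: "x \<in> dicyc n \<Longrightarrow> Pq x"
  unfolding dicyc_def
proof (induction rule: qgen.induct)
  case (qgen_mult x y) then show ?case by (blast intro: Pq_mult)
next
  case (qgen_inv x) then show ?case by (blast intro: Pq_inv)
qed (auto simp: Pq_def one_quat_def qJ_def)

fun Wm :: "qmat \<Rightarrow> bool" where
  "Wm (QMat a b c d) \<longleftrightarrow> (b = 0 \<and> c = 0 \<and> Pq a \<and> Pq d) \<or> (a = 0 \<and> d = 0 \<and> Pq b \<and> Pq c)"

lemma Wm_mult: "Wm x \<Longrightarrow> Wm y \<Longrightarrow> Wm (mmul x y)"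
  by (cases x; cases y) (auto intro: Pq_mult)

lemma Wm_adj: "Wm x \<Longrightarrow> Wm (madj x)"
  by (cases x) (auto intro: Pq_cnj)

lemma G2_W:
  assumes "L \<subseteq> dicyc n" "H \<subseteq> dicyc n"
  shows "g \<in> GKLH L H \<Longrightarrow> Wm g"
  unfolding GKLH_def
proof (induction rule: mgen.induct)
  case mgen_one then show ?case by (simp add: mI_def Pq_one)
next
  case (mgen_gen s)
  have "\<forall>x\<in>L\<union>H. Pq x" using assms dicyc_P by blast
  with mgen_gen show ?case by (auto simp: Mb_def Pq_one Pq_inv)
next
  case (mgen_mult x y) then show ?case by (blast intro: Wm_mult)
next
  case (mgen_inv x) then show ?case by (blast intro: Wm_adj)
qed

lemma Pq_4: "Pq x \<Longrightarrow> Cq (x*x*(x*x))" by (rule Pq_sq[OF Cq_Pq[OF Pq_sq]])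

lemma W_pow4': assumes "Wm (QMat a b c d)"
  shows "\<exists>x y. pow4 (QMat a b c d) = QMat x 0 0 y \<and> Cq x \<and> Cq y"
proof -
  from assms have "(b = 0 \<and> c = 0 \<and> Pq a \<and> Pq d) \<or> (a = 0 \<and> d = 0 \<and> Pq b \<and> Pq c)" by simp
  then show ?thesis
  proof
    assume h: "b = 0 \<and> c = 0 \<and> Pq a \<and> Pq d"
    then show ?thesis by (auto simp: pow4_def intro: Pq_4)
  next
    assume h: "a = 0 \<and> d = 0 \<and> Pq b \<and> Pq c"
    then have "Cq (b*c*(b*c))" "Cq (c*b*(c*b))" using Pq_sq Pq_mult by auto
    then show ?thesis using h by (auto simp: pow4_def)
  qed
qed

lemma W_pow4: "Wm g \<Longrightarrow> \<exists>a d. pow4 g = QMat a 0 0 d \<and> Cq a \<and> Cq d"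
  using W_pow4' by (cases g) auto

lemma W_comm: assumes "Wm g" "Wm h" shows "mmul (pow4 g) (pow4 h) = mmul (pow4 h) (pow4 g)"
proof -
  obtain a d a' d' where "pow4 g = QMat a 0 0 d" "Cq a" "Cq d" "pow4 h = QMat a' 0 0 d'" "Cq a'" "Cq d'"
    using W_pow4 assms by metis
  then show ?thesis by (simp add: Cq_comm)
qed

lemma noncomm: "(qq*qq)*(qq*qq) * ((r*r)*(r*r)) \<noteq> ((r*r)*(r*r)) * ((qq*qq)*(qq*qq))"
  if "r = qI * qq * inverse qI"
proof -
  have r: "r = Quat (1/2) (1/2) (-1/2) (-1/2)" using that by (simp add: qq_def qI_def times_quat_def inverse_quat_def)
  have a: "(qq*qq)*(qq*qq) = Quat (-1/2) (-1/2) (-1/2) (-1/2)" by (simp add: qq_def times_quat_def)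
  have b: "(r*r)*(r*r) = Quat (-1/2) (-1/2) (1/2) (1/2)" by (simp add: r times_quat_def)
  show ?thesis unfolding a b by (simp add: times_quat_def)
qed

lemma G_closed: "x \<in> GKLH L H \<Longrightarrow> y \<in> GKLH L H \<Longrightarrow> mmul x y \<in> GKLH L H"
  by (rule G_mult)

lemma pow4_in: "x \<in> GKLH L H \<Longrightarrow> pow4 x \<in> GKLH L H"
  unfolding pow4_def by (intro G_closed)

theorem proposition5p11:
  fixes K L H L' H' :: "quat set" and n :: nat
  assumes "K \<in> {binT, binO, binI}"
    and "canonical_refl_group K L H"
    and "n \<ge> 2"
    and "canonical_refl_group (dicyc n) L' H'"
  shows "\<not> refl_isomorphic (GKLH L H) (GKLH L' H')"
proof
  assume "refl_isomorphic (GKLH L H) (GKLH L' H')"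
  then obtain f where bij: "bij_betw f (GKLH L H) (GKLH L' H')"
    and hom: "\<forall>x\<in>GKLH L H. \<forall>y\<in>GKLH L H. f (mmul x y) = mmul (f x) (f y)"
    unfolding refl_isomorphic_def by blast
  have rs: "reflection_system K L" using assms(2) by (simp add: canonical_refl_group_def)
  have Ku: "\<forall>x\<in>K. nq x = 1" using K_unit assms(1) by blast
  have gK: "qgen L = K" using rs by (simp add: reflection_system_def)
  have L2: "L' \<subseteq> dicyc n" "H' \<subseteq> dicyc n" using assms(4)
    by (auto simp: canonical_refl_group_def reflection_system_def normal_subgroup_def)
  define r where "r = qI * qq * inverse qI"
  have "qq \<in> qgen L" "r \<in> qgen L" using qq_in[OF assms(1)] gK
    by (auto simp: r_def intro: qgen.intros)
  then obtain y1 y2 where g1: "QMat qq 0 0 y1 \<in> GKLH L H" and g2: "QMat r 0 0 y2 \<in> GKLH L H"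
    using diag_in_G[OF rs Ku] by metis
  let ?g1 = "QMat qq 0 0 y1" and ?g2 = "QMat r 0 0 y2"
  have fp: "f (pow4 x) = pow4 (f x)" if "x \<in> GKLH L H" for x
    using hom that unfolding pow4_def by (simp add: G_closed)
  have inG: "f x \<in> GKLH L' H'" if "x \<in> GKLH L H" for x
    using bij that by (auto simp: bij_betw_def)
  have p1: "pow4 ?g1 \<in> GKLH L H" "pow4 ?g2 \<in> GKLH L H" using g1 g2 by (simp_all add: pow4_in)
  have "f (mmul (pow4 ?g1) (pow4 ?g2)) = mmul (f (pow4 ?g1)) (f (pow4 ?g2))"
    using hom p1 by blast
  also have "\<dots> = mmul (pow4 (f ?g1)) (pow4 (f ?g2))"
    using fp g1 g2 by metis
  also have "\<dots> = mmul (pow4 (f ?g2)) (pow4 (f ?g1))"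
    by (intro W_comm G2_W[OF L2] inG g1 g2)
  also have "\<dots> = mmul (f (pow4 ?g2)) (f (pow4 ?g1))"
    using fp g1 g2 by metis
  also have "\<dots> = f (mmul (pow4 ?g2) (pow4 ?g1))"
    using hom p1 by metis
  finally have eq: "f (mmul (pow4 ?g1) (pow4 ?g2)) = f (mmul (pow4 ?g2) (pow4 ?g1))" .
  have "inj_on f (GKLH L H)" using bij by (simp add: bij_betw_def)
  moreover have "mmul (pow4 ?g1) (pow4 ?g2) \<in> GKLH L H" "mmul (pow4 ?g2) (pow4 ?g1) \<in> GKLH L H"
    using p1 by (simp_all add: G_closed)
  ultimately have "mmul (pow4 ?g1) (pow4 ?g2) = mmul (pow4 ?g2) (pow4 ?g1)"
    using eq by (metis inj_onD)
  then have "(qq*qq)*(qq*qq) * ((r*r)*(r*r)) = ((r*r)*(r*r)) * ((qq*qq)*(qq*qq))"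
    unfolding pow4_def by simp
  then show False using noncomm[OF r_def] by blast
qed

end
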